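(* For every tournament $R$ on $[n]=\{1,\dots,n\}$ there exist distinct $f_1,\dots,f_n\in\mathcal G_0$ such that for all distinct $i,j\in[n]$, $$\int_{-1}^1 f_j(f_i^{-1}(t))\,dt>0 \iff (i,j)\in R .$$ That is, every finite tournament embeds into the restriction of the digraph $\Gamma_{\mathcal G}$ to $\mathcal G_0$.
   Context: A tournament on a set $I$ is a subset $R\subset I\times I$ containing no pair $(i,i)$ such that for every pair of distinct $i,j\in I$ exactly one of $(i,j),(j,i)$ lies in $R$. Let $\mathcal G$ be the group (under composition) of strictly increasing continuous maps $f:[-1,1]\to[-1,1]$ with $f(-1)=-1$, $f(1)=1$, and $\mathcal G_0=\{f\in\mathcal G:\int_{-1}^1 f(t)\,dt=0\}$. The digraph $\Gamma_{\mathcal G}$ on $\mathcal G$ has an edge $f\to g$ iff $\int_{-1}^1 g(f^{-1}(t))\,dt>0$. *)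

theory Defs
  imports "HOL-Analysis.Analysis"
begin

definition tournament :: "'a set \<Rightarrow> ('a \<times> 'a) set \<Rightarrow> bool" where
  "tournament I R \<longleftrightarrow> R \<subseteq> I \<times> I \<and> (\<forall>i. (i, i) \<notin> R) \<and>
     (\<forall>i\<in>I. \<forall>j\<in>I. i \<noteq> j \<longrightarrow> ((i, j) \<in> R \<longleftrightarrow> (j, i) \<notin> R))"

text \<open>Elements of the group G: strictly increasing continuous self-maps of [-1,1]
  fixing the endpoints. A map is represented by a function real => real; only its
  values on [-1,1] matter.\<close>
definition in_G :: "(real \<Rightarrow> real) \<Rightarrow> bool" where
  "in_G f \<longleftrightarrow> continuous_on {-1..1} f \<and> strict_mono_on {-1..1} f \<and>
     f ` {-1..1} \<subseteq> {-1..1} \<and> f (-1) = -1 \<and> f 1 = 1"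

definition in_G0 :: "(real \<Rightarrow> real) \<Rightarrow> bool" where
  "in_G0 f \<longleftrightarrow> in_G f \<and> integral {-1..1} f = 0"

definition Gamma_edge :: "(real \<Rightarrow> real) \<Rightarrow> (real \<Rightarrow> real) \<Rightarrow> bool" where
  "Gamma_edge f g \<longleftrightarrow> integral {-1..1} (\<lambda>t. g (inv_into {-1..1} f t)) > 0"

end

theory Submission
  imports Defs
begin


lemma ftc11:
  fixes F f :: "real \<Rightarrow> real"
  assumes "\<And>x. (F has_real_derivative f x) (at x)"
  shows "(f has_integral (F 1 - F (-1))) {-1..1}"
  apply (rule fundamental_theorem_of_calculus)
   apply simp
  using assms has_real_derivative_iff_has_vector_derivative has_vector_derivative_at_within by blast

lemma int_sin: "((\<lambda>x. sin (a*pi*x)) has_integral 0) {-1..1}"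
proof (cases "a = 0")
  case True then show ?thesis by simp
next
  case False
  have "((\<lambda>x. sin (a*pi*x)) has_integral ((\<lambda>x. - cos (a*pi*x) / (a*pi)) 1 - (\<lambda>x. - cos (a*pi*x) / (a*pi)) (-1))) {-1..1}"
    by (rule ftc11) (use False in \<open>auto intro!: derivative_eq_intros simp: field_simps\<close>)
  then show ?thesis by simp
qed

lemma int_cos:
  assumes "a \<in> \<int>" "a \<noteq> 0"
  shows "((\<lambda>x. cos (a*pi*x)) has_integral 0) {-1..1}"
proof -
  have "((\<lambda>x. cos (a*pi*x)) has_integral ((\<lambda>x. sin (a*pi*x) / (a*pi)) 1 - (\<lambda>x. sin (a*pi*x) / (a*pi)) (-1))) {-1..1}"
    by (rule ftc11) (use assms in \<open>auto intro!: derivative_eq_intros simp: field_simps\<close>)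
  moreover have "sin (a*pi) = 0" using assms(1) sin_times_pi_eq_0 by auto
  ultimately show ?thesis by simp
qed

lemma int_xcos: "((\<lambda>x. x * cos (a*pi*x)) has_integral 0) {-1..1}"
proof (cases "a = 0")
  case True then show ?thesis using ident_has_integral[of "-1" 1] by simp
next
  case False
  let ?F = "\<lambda>x. x * sin (a*pi*x) / (a*pi) + cos (a*pi*x) / (a*pi)^2"
  have "((\<lambda>x. x * cos (a*pi*x)) has_integral (?F 1 - ?F (-1))) {-1..1}"
    by (rule ftc11) (use False in \<open>auto intro!: derivative_eq_intros simp: field_simps power2_eq_square\<close>)
  then show ?thesis by simp
qed

lemma int_xsin:
  assumes "a \<in> \<int>" "a \<noteq> 0"
  shows "((\<lambda>x. x * sin (a*pi*x)) has_integral (- 2 * cos (a*pi) / (a*pi))) {-1..1}"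
proof -
  let ?F = "\<lambda>x. - x * cos (a*pi*x) / (a*pi) + sin (a*pi*x) / (a*pi)^2"
  have "((\<lambda>x. x * sin (a*pi*x)) has_integral (?F 1 - ?F (-1))) {-1..1}"
    by (rule ftc11) (use assms in \<open>auto intro!: derivative_eq_intros simp: field_simps power2_eq_square\<close>)
  moreover have "sin (a*pi) = 0" using assms(1) sin_times_pi_eq_0 by auto
  ultimately show ?thesis by (simp add: field_simps)
qed

lemma cc_eq: "cos (a*pi*x) * cos (b*pi*x) = cos ((a-b)*pi*x)/2 + cos ((a+b)*pi*x)/2"
proof -
  have "(a-b)*pi*x = a*pi*x - b*pi*x" "(a+b)*pi*x = a*pi*x + b*pi*x" by algebra+
  then show ?thesis by (simp add: cos_add cos_diff field_simps)
qed

lemma ss_eq: "sin (a*pi*x) * sin (b*pi*x) = cos ((a-b)*pi*x)/2 - cos ((a+b)*pi*x)/2"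
proof -
  have "(a-b)*pi*x = a*pi*x - b*pi*x" "(a+b)*pi*x = a*pi*x + b*pi*x" by algebra+
  then show ?thesis by (simp add: cos_add cos_diff field_simps)
qed

lemma sc_eq: "sin (a*pi*x) * cos (b*pi*x) = sin ((a+b)*pi*x)/2 + sin ((a-b)*pi*x)/2"
proof -
  have "(a-b)*pi*x = a*pi*x - b*pi*x" "(a+b)*pi*x = a*pi*x + b*pi*x" by algebra+
  then show ?thesis by (simp add: sin_add sin_diff field_simps)
qed

lemma int_sc: "((\<lambda>x. sin (a*pi*x) * cos (b*pi*x)) has_integral 0) {-1..1}"
  unfolding sc_eq using has_integral_add[OF has_integral_divide[OF int_sin] has_integral_divide[OF int_sin]]
  by simp

lemma int_cc:
  assumes "a \<in> \<int>" "b \<in> \<int>" "a + b \<noteq> 0"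
  shows "((\<lambda>x. cos (a*pi*x) * cos (b*pi*x)) has_integral (if a = b then 1 else 0)) {-1..1}"
proof -
  have p: "((\<lambda>x. cos ((a+b)*pi*x)/2) has_integral 0) {-1..1}"
    using has_integral_divide[OF int_cos[of "a+b"]] assms by simp
  show ?thesis
  proof (cases "a = b")
    case True
    have "((\<lambda>x. cos ((a-b)*pi*x)/2) has_integral 1) {-1..1}"
      using True has_integral_const_real[of "1/2::real" "-1" 1] by simp
    from has_integral_add[OF this p] True show ?thesis unfolding cc_eq by simp
  next
    case False
    have "((\<lambda>x. cos ((a-b)*pi*x)/2) has_integral 0) {-1..1}"
      using has_integral_divide[OF int_cos[of "a-b"]] assms False by simp
    from has_integral_add[OF this p] False show ?thesis unfolding cc_eq by simp
  qed
qed

lemma int_ss: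
  assumes "a \<in> \<int>" "b \<in> \<int>" "a + b \<noteq> 0"
  shows "((\<lambda>x. sin (a*pi*x) * sin (b*pi*x)) has_integral (if a = b then 1 else 0)) {-1..1}"
proof -
  have p: "((\<lambda>x. cos ((a+b)*pi*x)/2) has_integral 0) {-1..1}"
    using has_integral_divide[OF int_cos[of "a+b"]] assms by simp
  show ?thesis
  proof (cases "a = b")
    case True
    have "((\<lambda>x. cos ((a-b)*pi*x)/2) has_integral 1) {-1..1}"
      using True has_integral_const_real[of "1/2::real" "-1" 1] by simp
    from has_integral_diff[OF this p] True show ?thesis unfolding ss_eq by simp
  next
    case False
    have "((\<lambda>x. cos ((a-b)*pi*x)/2) has_integral 0) {-1..1}"
      using has_integral_divide[OF int_cos[of "a-b"]] assms False by simp
    from has_integral_diff[OF this p] False show ?thesis unfolding ss_eq by simp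
  qed
qed


definition wc :: "nat \<Rightarrow> real \<Rightarrow> real" where
  "wc k x = cos ((2*real k)*pi*x) + cos ((2*real k - 1)*pi*x)"
definition wd :: "nat \<Rightarrow> real \<Rightarrow> real" where
  "wd k x = - (2*real k*pi) * sin ((2*real k)*pi*x) - ((2*real k - 1)*pi) * sin ((2*real k - 1)*pi*x)"
definition uf :: "nat \<Rightarrow> real \<Rightarrow> real" where
  "uf k x = sin ((2*real k)*pi*x) / real k"
definition ud :: "nat \<Rightarrow> real \<Rightarrow> real" where
  "ud k x = 2*pi*cos ((2*real k)*pi*x)"

lemma ints1: "2 * real k \<in> \<int>" "2 * real k - 1 \<in> \<int>"
  by (auto intro!: Ints_diff Ints_mult)

lemma cos2k: "cos (2*real k*pi) = 1"
proof -
  have "2*real k*pi = real (2*k) * pi" by simp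
  then show ?thesis by (simp only: cos_npi) simp
qed

lemma sin2k: "sin (2*real k*pi) = 0"
  using sin_times_pi_eq_0[of "2*real k"] ints1 by simp

lemma cos2k1: "cos ((2*real k - 1)*pi) = -1"
proof -
  have "(2*real k - 1)*pi = 2*real k*pi - pi" by algebra
  then show ?thesis by (simp add: cos_diff cos2k sin2k)
qed

lemma sin2k1: "sin ((2*real k - 1)*pi) = 0"
  using sin_times_pi_eq_0[of "2*real k - 1"] ints1 by simp

lemma wc_deriv: "(wc k has_real_derivative wd k x) (at x)"
  unfolding wc_def[abs_def] wd_def
  by (auto intro!: derivative_eq_intros simp: algebra_simps)

lemma uf_deriv: "k \<ge> 1 \<Longrightarrow> (uf k has_real_derivative ud k x) (at x)"
  unfolding uf_def[abs_def] ud_def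
  by (auto intro!: derivative_eq_intros simp: algebra_simps)

lemma wc_pm1: "wc k 1 = 0" "wc k (-1) = 0"
  unfolding wc_def using cos2k[of k] cos2k1[of k] by simp_all

lemma uf_pm1: "uf k 1 = 0" "uf k (-1) = 0"
  unfolding uf_def using sin2k[of k] by simp_all

lemma int_wc: "k \<ge> 1 \<Longrightarrow> (wc k has_integral 0) {-1..1}"
  unfolding wc_def[abs_def]
  using has_integral_add[OF int_cos[of "2*real k"] int_cos[of "2*real k - 1"]] ints1
  by simp

lemma int_uf: "(uf k has_integral 0) {-1..1}"
  unfolding uf_def[abs_def] using has_integral_divide[OF int_sin[of "2*real k"], of "real k"] by simp

lemma int_xud: "((\<lambda>x. x * ud k x) has_integral 0) {-1..1}"
  unfolding ud_def using has_integral_mult_right[OF int_xcos[of "2*real k"], of "2*pi"]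
  by (simp add: algebra_simps)

lemma int_xwd: 
  assumes "k \<ge> 1"
  shows "((\<lambda>x. x * wd k x) has_integral 0) {-1..1}"
proof -
  have a: "2*real k \<noteq> 0" "2*real k - 1 \<noteq> 0" using assms by auto
  have "((\<lambda>x. (- (2*real k*pi)) * (x * sin ((2*real k)*pi*x)) - ((2*real k - 1)*pi) * (x * sin ((2*real k - 1)*pi*x)))
     has_integral ((- (2*real k*pi)) * (- 2 * cos ((2*real k)*pi) / ((2*real k)*pi))
        - ((2*real k - 1)*pi) * (- 2 * cos ((2*real k - 1)*pi) / ((2*real k - 1)*pi)))) {-1..1}"
    by (intro has_integral_diff has_integral_mult_right int_xsin ints1 a)
  moreover have "(- (2*real k*pi)) * (- 2 * cos ((2*real k)*pi) / ((2*real k)*pi))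
        - ((2*real k - 1)*pi) * (- 2 * cos ((2*real k - 1)*pi) / ((2*real k - 1)*pi)) = 0"
    using a by (simp add: cos2k cos2k1)
  ultimately show ?thesis unfolding wd_def by (simp add: algebra_simps)
qed

lemma int_uf_ud: "((\<lambda>x. uf j x * ud i x) has_integral 0) {-1..1}"
proof -
  have "((\<lambda>x. (2*pi/real j) * (sin ((2*real j)*pi*x) * cos ((2*real i)*pi*x))) has_integral (2*pi/real j) * 0) {-1..1}"
    by (intro has_integral_mult_right int_sc)
  then show ?thesis unfolding uf_def ud_def by (simp add: algebra_simps)
qed

lemma int_uf_wd:
  assumes "j \<ge> 1" "k \<ge> 1"
  shows "((\<lambda>x. uf j x * wd k x) has_integral (if k = j then - 2 * pi else 0)) {-1..1}"
proof -
  have h1: "((\<lambda>x. sin ((2*real j)*pi*x) * sin ((2*real k)*pi*x)) has_integral (if 2*real j = 2*real k then 1 else 0)) {-1..1}"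
    by (rule int_ss) (use assms ints1 in auto)
  have h2: "((\<lambda>x. sin ((2*real j)*pi*x) * sin ((2*real k - 1)*pi*x)) has_integral (if 2*real j = 2*real k - 1 then 1 else 0)) {-1..1}"
    by (rule int_ss) (use assms ints1 in auto)
  have ne: "2*real j \<noteq> 2*real k - 1"
  proof
    assume "2*real j = 2*real k - 1"
    then have "real (2*j+1) = real (2*k)" by simp
    then have "2*j+1 = 2*k" by (simp only: of_nat_eq_iff)
    then show False by presburger
  qed
  have fe: "(\<lambda>x. uf j x * wd k x) = (\<lambda>x. (- (2*real k*pi) / real j) * (sin ((2*real j)*pi*x) * sin ((2*real k)*pi*x))
     - ((2*real k - 1)*pi / real j) * (sin ((2*real j)*pi*x) * sin ((2*real k - 1)*pi*x)))"
    by (rule ext) (unfold uf_def wd_def divide_inverse, algebra)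
  have "((\<lambda>x. (- (2*real k*pi) / real j) * (sin ((2*real j)*pi*x) * sin ((2*real k)*pi*x))
     - ((2*real k - 1)*pi / real j) * (sin ((2*real j)*pi*x) * sin ((2*real k - 1)*pi*x)))
     has_integral ((- (2*real k*pi) / real j) * (if 2*real j = 2*real k then 1 else 0)
       - ((2*real k - 1)*pi / real j) * (if 2*real j = 2*real k - 1 then 1 else 0))) {-1..1}"
    by (intro has_integral_diff has_integral_mult_right h1 h2)
  moreover have "((- (2*real k*pi) / real j) * (if 2*real j = 2*real k then 1 else 0)
       - ((2*real k - 1)*pi / real j) * (if 2*real j = 2*real k - 1 then 1 else 0)) = (if k = j then - 2 * pi else 0)"
    using ne assms by auto
  ultimately show ?thesis unfolding fe by simp
qed

lemma int_wc_ud: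
  assumes "l \<ge> 1" "i \<ge> 1"
  shows "((\<lambda>x. wc l x * ud i x) has_integral (if l = i then 2 * pi else 0)) {-1..1}"
proof -
  have h1: "((\<lambda>x. cos ((2*real l)*pi*x) * cos ((2*real i)*pi*x)) has_integral (if 2*real l = 2*real i then 1 else 0)) {-1..1}"
    by (rule int_cc) (use assms ints1 in auto)
  have h2: "((\<lambda>x. cos ((2*real l - 1)*pi*x) * cos ((2*real i)*pi*x)) has_integral (if 2*real l - 1 = 2*real i then 1 else 0)) {-1..1}"
    by (rule int_cc) (use assms ints1 in auto)
  have ne: "2*real l - 1 \<noteq> 2*real i"
  proof
    assume "2*real l - 1 = 2*real i"
    then have "real (2*i+1) = real (2*l)" by simp
    then have "2*i+1 = 2*l" by (simp only: of_nat_eq_iff)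
    then show False by presburger
  qed
  have "((\<lambda>x. (2*pi) * (cos ((2*real l)*pi*x) * cos ((2*real i)*pi*x))
     + (2*pi) * (cos ((2*real l - 1)*pi*x) * cos ((2*real i)*pi*x)))
     has_integral ((2*pi) * (if 2*real l = 2*real i then 1 else 0)
       + (2*pi) * (if 2*real l - 1 = 2*real i then 1 else 0))) {-1..1}"
    by (intro has_integral_add has_integral_mult_right h1 h2)
  moreover have "((2*pi) * (if 2*real l = 2*real i then 1 else 0)
       + (2*pi) * (if 2*real l - 1 = 2*real i then 1 else (0::real))) = (if l = i then 2 * pi else 0)"
    using ne assms by auto
  ultimately show ?thesis unfolding wc_def ud_def by (simp add: algebra_simps)
qed

lemma int_wc_wd: "((\<lambda>x. wc l x * wd k x) has_integral 0) {-1..1}"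
proof -
  have "((\<lambda>x. (- (2*real k*pi)) * (sin ((2*real k)*pi*x) * cos ((2*real l)*pi*x))
      + (- (2*real k*pi)) * (sin ((2*real k)*pi*x) * cos ((2*real l - 1)*pi*x))
      + (- ((2*real k - 1)*pi)) * (sin ((2*real k - 1)*pi*x) * cos ((2*real l)*pi*x))
      + (- ((2*real k - 1)*pi)) * (sin ((2*real k - 1)*pi*x) * cos ((2*real l - 1)*pi*x)))
     has_integral (0 + 0 + 0 + 0)) {-1..1}"
    by (intro has_integral_add has_integral_mult_right[where y=0, simplified] int_sc)
  then show ?thesis unfolding wc_def wd_def by (simp add: algebra_simps)
qed


definition beta :: "(nat \<times> nat) set \<Rightarrow> nat \<Rightarrow> nat \<Rightarrow> real" where
  "beta R i k = (if (k, i) \<in> R then 1 else 0)"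
definition phi :: "nat \<Rightarrow> (nat \<times> nat) set \<Rightarrow> nat \<Rightarrow> real \<Rightarrow> real" where
  "phi n R i x = uf i x + (\<Sum>k\<in>{1..n}. beta R i k * wc k x)"
definition phid :: "nat \<Rightarrow> (nat \<times> nat) set \<Rightarrow> nat \<Rightarrow> real \<Rightarrow> real" where
  "phid n R i x = ud i x + (\<Sum>k\<in>{1..n}. beta R i k * wd k x)"
definition bnd :: "nat \<Rightarrow> real" where "bnd n = 2*pi + 4*pi*(real n)^2"
definition eps :: "nat \<Rightarrow> real" where "eps n = 1 / (2 * bnd n)"
definition ff :: "nat \<Rightarrow> (nat \<times> nat) set \<Rightarrow> nat \<Rightarrow> real \<Rightarrow> real" where
  "ff n R i x = x + eps n * phi n R i x"

lemma phi_deriv: "i \<ge> 1 \<Longrightarrow> (phi n R i has_real_derivative phid n R i x) (at x)"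
  unfolding phi_def[abs_def] phid_def
  by (intro DERIV_add uf_deriv DERIV_sum DERIV_cmult wc_deriv)

lemma int_phi: "(phi n R i has_integral 0) {-1..1}"
proof -
  have "((\<lambda>x. uf i x + (\<Sum>k\<in>{1..n}. beta R i k * wc k x)) has_integral (0 + (\<Sum>k\<in>{1..n}. beta R i k * 0))) {-1..1}"
    by (intro has_integral_add int_uf has_integral_sum has_integral_mult_right int_wc) auto
  then show ?thesis unfolding phi_def[abs_def] by simp
qed

lemma int_xphid: "((\<lambda>x. x * phid n R i x) has_integral 0) {-1..1}"
proof -
  have "((\<lambda>x. x * ud i x + (\<Sum>k\<in>{1..n}. beta R i k * (x * wd k x))) has_integral (0 + (\<Sum>k\<in>{1..n}. beta R i k * 0))) {-1..1}"
    by (intro has_integral_add int_xud has_integral_sum has_integral_mult_right int_xwd) auto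
  moreover have "(\<lambda>x. x * phid n R i x) = (\<lambda>x. x * ud i x + (\<Sum>k\<in>{1..n}. beta R i k * (x * wd k x)))"
    by (rule ext) (simp add: phid_def distrib_left sum_distrib_left algebra_simps)
  ultimately show ?thesis by simp
qed

lemma int_phi_phid:
  assumes "i \<in> {1..n}" "j \<in> {1..n}"
  shows "((\<lambda>x. phi n R j x * phid n R i x) has_integral 2*pi*(beta R j i - beta R i j)) {-1..1}"
proof -
  have fe: "(\<lambda>x. phi n R j x * phid n R i x) = (\<lambda>x. uf j x * ud i x
     + (\<Sum>k\<in>{1..n}. beta R i k * (uf j x * wd k x))
     + (\<Sum>l\<in>{1..n}. beta R j l * (wc l x * ud i x))
     + (\<Sum>k\<in>{1..n}. \<Sum>l\<in>{1..n}. (beta R j l * beta R i k) * (wc l x * wd k x)))"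
  proof (rule ext)
    fix x
    have "phi n R j x * phid n R i x = uf j x * ud i x + uf j x * (\<Sum>k\<in>{1..n}. beta R i k * wd k x)
       + (\<Sum>k\<in>{1..n}. beta R j k * wc k x) * ud i x
       + (\<Sum>k\<in>{1..n}. beta R j k * wc k x) * (\<Sum>k\<in>{1..n}. beta R i k * wd k x)"
      unfolding phi_def phid_def by algebra
    also have "\<dots> = uf j x * ud i x
     + (\<Sum>k\<in>{1..n}. beta R i k * (uf j x * wd k x))
     + (\<Sum>l\<in>{1..n}. beta R j l * (wc l x * ud i x))
     + (\<Sum>k\<in>{1..n}. \<Sum>l\<in>{1..n}. (beta R j l * beta R i k) * (wc l x * wd k x))"
      by (simp add: sum_distrib_left sum_distrib_right sum_product mult_ac)
    finally show "phi n R j x * phid n R i x = uf j x * ud i x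
     + (\<Sum>k\<in>{1..n}. beta R i k * (uf j x * wd k x))
     + (\<Sum>l\<in>{1..n}. beta R j l * (wc l x * ud i x))
     + (\<Sum>k\<in>{1..n}. \<Sum>l\<in>{1..n}. (beta R j l * beta R i k) * (wc l x * wd k x))" .
  qed
  have "((\<lambda>x. uf j x * ud i x
     + (\<Sum>k\<in>{1..n}. beta R i k * (uf j x * wd k x))
     + (\<Sum>l\<in>{1..n}. beta R j l * (wc l x * ud i x))
     + (\<Sum>k\<in>{1..n}. \<Sum>l\<in>{1..n}. (beta R j l * beta R i k) * (wc l x * wd k x)))
     has_integral (0 + (\<Sum>k\<in>{1..n}. beta R i k * (if k = j then - 2 * pi else 0))
        + (\<Sum>l\<in>{1..n}. beta R j l * (if l = i then 2 * pi else 0))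
        + (\<Sum>k\<in>{1..n}. \<Sum>l\<in>{1..n}. (beta R j l * beta R i k) * 0))) {-1..1}"
    using assms
    by (intro has_integral_add int_uf_ud has_integral_sum has_integral_mult_right int_uf_wd int_wc_ud int_wc_wd) auto
  moreover have "(0 + (\<Sum>k\<in>{1..n}. beta R i k * (if k = j then - 2 * pi else 0))
        + (\<Sum>l\<in>{1..n}. beta R j l * (if l = i then 2 * pi else 0))
        + (\<Sum>k\<in>{1..n}. \<Sum>l\<in>{1..n}. (beta R j l * beta R i k) * 0)) = 2*pi*(beta R j i - beta R i j)"
    using assms by (simp add: if_distrib sum.delta' cong: if_cong) (simp add: algebra_simps)
  ultimately show ?thesis unfolding fe by simp
qed

lemma phid_bound:
  assumes "i \<ge> 1"
  shows "\<bar>phid n R i x\<bar> \<le> bnd n"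
proof -
  have u: "\<bar>ud i x\<bar> \<le> 2*pi" unfolding ud_def by (simp add: abs_mult)
  have w: "\<bar>beta R i k * wd k x\<bar> \<le> 4*pi*real n" if "k \<in> {1..n}" for k
  proof -
    have b: "\<bar>beta R i k\<bar> \<le> 1" unfolding beta_def by auto
    have "\<bar>wd k x\<bar> \<le> (2*real k*pi) * 1 + ((2*real k - 1)*pi) * 1"
      unfolding wd_def using that
      by (intro order.trans[OF abs_triangle_ineq4] add_mono) (auto simp: abs_mult intro!: mult_left_mono)
    also have "\<dots> \<le> 4*pi*real n"
    proof -
      have "4*pi*real k \<le> 4*pi*real n" using that by (intro mult_left_mono) auto
      moreover have "(2*real k*pi) * 1 + ((2*real k - 1)*pi) * 1 = 4*pi*real k - pi" by algebra
      ultimately show ?thesis using pi_gt_zero by linarith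
    qed
    finally have "\<bar>wd k x\<bar> \<le> 4*pi*real n" .
    then show ?thesis using b by (simp add: abs_mult) (metis abs_ge_zero mult_le_one mult_mono' mult.commute mult_1 order_trans)
  qed
  have "\<bar>\<Sum>k\<in>{1..n}. beta R i k * wd k x\<bar> \<le> (\<Sum>k\<in>{1..n}. 4*pi*real n)"
    by (rule order.trans[OF sum_abs sum_mono]) (use w in auto)
  also have "\<dots> = 4*pi*(real n)^2" by (simp add: power2_eq_square)
  finally show ?thesis unfolding phid_def bnd_def using u by linarith
qed


lemma bnd_pos: "bnd n > 0"
  unfolding bnd_def using pi_gt_zero by (simp add: add_pos_nonneg)

lemma eps_pos: "eps n > 0"
  unfolding eps_def using bnd_pos[of n] by simp

lemma ff_deriv: "i \<ge> 1 \<Longrightarrow> (ff n R i has_real_derivative (1 + eps n * phid n R i x)) (at x)"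
  unfolding ff_def[abs_def] by (intro DERIV_add DERIV_ident DERIV_cmult phi_deriv)

lemma ffd_pos:
  assumes "i \<ge> 1"
  shows "1 + eps n * phid n R i x > 0"
proof -
  have "\<bar>eps n * phid n R i x\<bar> \<le> eps n * bnd n"
    using phid_bound[OF assms, of n R x] eps_pos[of n] by (simp add: abs_mult)
  also have "eps n * bnd n = 1/2" unfolding eps_def using bnd_pos[of n] by simp
  finally show ?thesis by linarith
qed

lemma ff_cont: "i \<ge> 1 \<Longrightarrow> continuous_on S (ff n R i)"
  by (rule DERIV_continuous_on) (blast intro: has_field_derivative_at_within ff_deriv)

lemma phi_pm1: "phi n R i 1 = 0" "phi n R i (-1) = 0"
  unfolding phi_def by (simp_all add: uf_pm1 wc_pm1)

lemma ff_pm1: "ff n R i 1 = 1" "ff n R i (-1) = -1"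
  unfolding ff_def by (simp_all add: phi_pm1)

lemma ff_smono:
  assumes "i \<ge> 1"
  shows "strict_mono_on {-1..1} (ff n R i)"
proof (rule strict_mono_onI)
  fix r s :: real assume "r \<in> {-1..1}" "s \<in> {-1..1}" "r < s"
  show "ff n R i r < ff n R i s"
    by (rule DERIV_pos_imp_increasing[OF \<open>r < s\<close>]) (use ff_deriv[OF assms] ffd_pos[OF assms] in blast)
qed

lemma ff_image:
  assumes "i \<ge> 1"
  shows "ff n R i ` {-1..1} = {-1..1}"
proof
  show "ff n R i ` {-1..1} \<subseteq> {-1..1}"
  proof
    fix y assume "y \<in> ff n R i ` {-1..1}"
    then obtain x where x: "x \<in> {-1..1}" "y = ff n R i x" by auto
    have "ff n R i (-1) \<le> ff n R i x" "ff n R i x \<le> ff n R i 1"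
      using strict_mono_on_leD[OF ff_smono[OF assms]] x by auto
    then show "y \<in> {-1..1}" using x ff_pm1 by auto
  qed
next
  show "{-1..1} \<subseteq> ff n R i ` {-1..1}"
  proof
    fix y :: real assume y: "y \<in> {-1..1}"
    have "\<exists>x. -1 \<le> x \<and> x \<le> 1 \<and> ff n R i x = y"
      by (rule IVT') (use y ff_pm1 ff_cont[OF assms] in auto)
    then show "y \<in> ff n R i ` {-1..1}" by force
  qed
qed

lemma ff_in_G0:
  assumes "i \<ge> 1"
  shows "in_G0 (ff n R i)"
proof -
  have "((\<lambda>x. x + eps n * phi n R i x) has_integral (0 + eps n * 0)) {-1..1}"
    using ident_has_integral[of "-1" 1]
    by (intro has_integral_add has_integral_mult_right int_phi) simp_all
  then have "integral {-1..1} (ff n R i) = 0" unfolding ff_def[abs_def] by (simp add: integral_unique)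
  moreover have "in_G (ff n R i)"
    unfolding in_G_def using ff_cont[OF assms] ff_smono[OF assms] ff_image[OF assms] ff_pm1 by auto
  ultimately show ?thesis unfolding in_G0_def by simp
qed

lemma int_prod:
  assumes "i \<in> {1..n}" "j \<in> {1..n}"
  shows "((\<lambda>x. (1 + eps n * phid n R i x) * ff n R j x) has_integral
          eps n ^ 2 * (2*pi*(beta R j i - beta R i j))) {-1..1}"
proof -
  have "((\<lambda>x. x + eps n * phi n R j x + eps n * (x * phid n R i x) + eps n ^ 2 * (phi n R j x * phid n R i x))
     has_integral (0 + eps n * 0 + eps n * 0 + eps n ^ 2 * (2*pi*(beta R j i - beta R i j)))) {-1..1}"
    using ident_has_integral[of "-1" 1]
    by (intro has_integral_add has_integral_mult_right int_phi int_xphid int_phi_phid assms) simp_all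
  moreover have "(\<lambda>x. (1 + eps n * phid n R i x) * ff n R j x) =
     (\<lambda>x. x + eps n * phi n R j x + eps n * (x * phid n R i x) + eps n ^ 2 * (phi n R j x * phid n R i x))"
    by (rule ext) (unfold ff_def power2_eq_square, algebra)
  ultimately show ?thesis by simp
qed

lemma gamma_val:
  assumes "i \<in> {1..n}" "j \<in> {1..n}"
  shows "integral {-1..1} (\<lambda>t. ff n R j (inv_into {-1..1} (ff n R i) t)) =
          eps n ^ 2 * (2*pi*(beta R j i - beta R i j))"
proof -
  have i1: "i \<ge> 1" "j \<ge> 1" using assms by auto
  let ?g = "ff n R i"
  let ?h = "\<lambda>t. ff n R j (inv_into {-1..1} ?g t)"
  have inj: "inj_on ?g {-1..1}" using strict_mono_on_imp_inj_on[OF ff_smono[OF i1(1)]] .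
  have ci: "continuous_on (?g ` {-1..1}) (inv_into {-1..1} ?g)"
    by (rule continuous_on_inv[OF ff_cont[OF i1(1)]]) (auto simp: inv_into_f_f[OF inj])
  have ch: "continuous_on {-1..1} ?h"
  proof -
    have "continuous_on (?g ` {-1..1}) (ff n R j \<circ> inv_into {-1..1} ?g)"
      by (rule continuous_on_compose[OF ci ff_cont[OF i1(2)]])
    then show ?thesis using ff_image[OF i1(1)] by (simp add: o_def)
  qed
  have sub: "((\<lambda>x. (1 + eps n * phid n R i x) *\<^sub>R ?h (?g x)) has_integral integral {?g (-1)..?g 1} ?h) {-1..1}"
    by (rule has_integral_substitution[where c="-1" and d=1])
       (use ff_pm1 ff_image[OF i1(1)] ch in \<open>auto intro: has_field_derivative_at_within ff_deriv[OF i1(1)]\<close>)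
  have "((\<lambda>x. (1 + eps n * phid n R i x) * ff n R j x) has_integral integral {-1..1} ?h) {-1..1}"
  proof -
    have "((\<lambda>x. (1 + eps n * phid n R i x) *\<^sub>R ?h (?g x)) has_integral integral {-1..1} ?h) {-1..1}"
      using sub ff_pm1 by simp
    then show ?thesis
      by (rule iffD1[OF has_integral_cong, rotated]) (simp add: inv_into_f_f[OF inj])
  qed
  from has_integral_unique[OF this int_prod[OF assms]] show ?thesis .
qed


theorem theorem2p1:
  fixes n :: nat and R :: "(nat \<times> nat) set"
  assumes "tournament {1..n} R"
  shows "\<exists>f :: nat \<Rightarrow> real \<Rightarrow> real.
           (\<forall>i\<in>{1..n}. in_G0 (f i)) \<and>
           (\<forall>i\<in>{1..n}. \<forall>j\<in>{1..n}. i \<noteq> j \<longrightarrow> (\<exists>t\<in>{-1..1}. f i t \<noteq> f j t)) \<and>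
           (\<forall>i\<in>{1..n}. \<forall>j\<in>{1..n}. i \<noteq> j \<longrightarrow> (Gamma_edge (f i) (f j) \<longleftrightarrow> (i, j) \<in> R))"
proof (intro exI[of _ "ff n R"] conjI ballI impI)
  have tour: "(i, j) \<in> R \<longleftrightarrow> (j, i) \<notin> R" if "i \<in> {1..n}" "j \<in> {1..n}" "i \<noteq> j" for i j
    using assms that unfolding tournament_def by blast
  have bdiff: "beta R j i - beta R i j = (if (i, j) \<in> R then 1 else -1)"
    if "i \<in> {1..n}" "j \<in> {1..n}" "i \<noteq> j" for i j
    using tour[OF that] unfolding beta_def by auto
  fix i assume i: "i \<in> {1..n}"
  then show "in_G0 (ff n R i)" by (intro ff_in_G0) auto
  fix j assume j: "j \<in> {1..n}"
  {
    assume ij: "i \<noteq> j"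
    have e2: "eps n ^ 2 > 0" using eps_pos[of n] by simp
    show "Gamma_edge (ff n R i) (ff n R j) \<longleftrightarrow> (i, j) \<in> R"
      unfolding Gamma_edge_def gamma_val[OF i j] bdiff[OF i j ij]
      using e2 pi_gt_zero by (auto simp: zero_less_mult_iff mult_less_0_iff)
  next
    assume ij: "i \<noteq> j"
    show "\<exists>t\<in>{-1..1}. ff n R i t \<noteq> ff n R j t"
    proof (rule ccontr)
      assume "\<not> ?thesis"
      then have eq: "phi n R j t = phi n R i t" if "t \<in> {-1..1}" for t
        using that eps_pos[of n] unfolding ff_def by auto
      have a: "((\<lambda>x. phi n R j x * phid n R i x) has_integral 2*pi*(beta R j i - beta R i j)) {-1..1}"
        by (rule int_phi_phid[OF i j])
      have "((\<lambda>x. phi n R i x * phid n R i x) has_integral 2*pi*(beta R i i - beta R i i)) {-1..1}"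
        by (rule int_phi_phid[OF i i])
      then have z: "((\<lambda>x. phi n R i x * phid n R i x) has_integral 0) {-1..1}" by simp
      have "((\<lambda>x. phi n R j x * phid n R i x) has_integral 0) {-1..1} =
            ((\<lambda>x. phi n R i x * phid n R i x) has_integral 0) {-1..1}"
        by (rule has_integral_cong) (simp add: eq)
      with z have "((\<lambda>x. phi n R j x * phid n R i x) has_integral 0) {-1..1}" by simp
      from has_integral_unique[OF a this] bdiff[OF i j ij] pi_gt_zero show False
        by (auto split: if_splits)
    qed
  }
qed

end
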